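(* Let $n\ge0$, $k\ge1$ and $1\le j\le k$. Then for every formula $\alpha$, $\vdash_{L_n^k}\circ^j\alpha\leftrightarrow\circ^j\neg\alpha$.
   Context: Formulas are built from a countable set of propositional variables using unary $\neg,\circ$ and binary $\land,\lor,\to$; $\circ^0\alpha=\alpha$, $\circ^{m+1}\alpha=\circ(\circ^m\alpha)$, $\alpha\leftrightarrow\beta:=(\alpha\to\beta)\land(\beta\to\alpha)$. mbC is the Hilbert calculus with the axiom schemas of a standard axiomatization of positive classical propositional logic in $\land,\lor,\to$, plus (TND) $\alpha\lor\neg\alpha$ and (bc1) $\circ\alpha\to(\alpha\to(\neg\alpha\to\beta))$, modus ponens being the only rule; mbCciw is mbC plus (ciw) $\circ\alpha\lor(\alpha\land\neg\alpha)$. For $n\ge0$, $k\ge1$, $L_n^k$ is mbCciw plus (cc$^n$) $\circ^{n+2}\alpha$, (dn) $\neg\neg\alpha\leftrightarrow\alpha$, and (ip$^j$) $\neg\circ^j\neg\alpha\leftrightarrow\neg\circ^j\alpha$ for each $1\le j<k$. $\vdash_L$ denotes derivability in $L$. *)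

theory Defs
  imports Main
begin

datatype fm =
    Var nat
  | Neg fm
  | Circ fm
  | Conj fm fm
  | Disj fm fm
  | Imp fm fm

definition Iff :: "fm \<Rightarrow> fm \<Rightarrow> fm" where
  "Iff a b = Conj (Imp a b) (Imp b a)"

fun circ_pow :: "nat \<Rightarrow> fm \<Rightarrow> fm" where
  "circ_pow 0 a = a"
| "circ_pow (Suc m) a = Circ (circ_pow m a)"

text \<open>Axiom schemas of positive classical propositional logic (the standard
  axiomatization used for mbC by Carnielli and Coniglio), plus TND and bc1.\<close>

inductive mbC_axiom :: "fm \<Rightarrow> bool" where
  Ax1: "mbC_axiom (Imp a (Imp b a))"
| Ax2: "mbC_axiom (Imp (Imp a b) (Imp (Imp a (Imp b c)) (Imp a c)))"
| Ax3: "mbC_axiom (Imp a (Imp b (Conj a b)))"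
| Ax4: "mbC_axiom (Imp (Conj a b) a)"
| Ax5: "mbC_axiom (Imp (Conj a b) b)"
| Ax6: "mbC_axiom (Imp a (Disj a b))"
| Ax7: "mbC_axiom (Imp b (Disj a b))"
| Ax8: "mbC_axiom (Imp (Imp a c) (Imp (Imp b c) (Imp (Disj a b) c)))"
| Ax9: "mbC_axiom (Disj a (Imp a b))"
| TND: "mbC_axiom (Disj a (Neg a))"
| bc1: "mbC_axiom (Imp (Circ a) (Imp a (Imp (Neg a) b)))"

inductive L_axiom :: "nat \<Rightarrow> nat \<Rightarrow> fm \<Rightarrow> bool" for n k where
  mbC: "mbC_axiom a \<Longrightarrow> L_axiom n k a"
| ciw: "L_axiom n k (Disj (Circ a) (Conj a (Neg a)))"
| cc: "L_axiom n k (circ_pow (n + 2) a)"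
| dn: "L_axiom n k (Iff (Neg (Neg a)) a)"
| ip: "1 \<le> j \<Longrightarrow> j < k \<Longrightarrow> L_axiom n k (Iff (Neg (circ_pow j (Neg a))) (Neg (circ_pow j a)))"

inductive L_derivable :: "nat \<Rightarrow> nat \<Rightarrow> fm \<Rightarrow> bool" for n k where
  ax: "L_axiom n k a \<Longrightarrow> L_derivable n k a"
| mp: "L_derivable n k a \<Longrightarrow> L_derivable n k (Imp a b) \<Longrightarrow> L_derivable n k b"

end

theory Submission
  imports Defs
begin

inductive der :: "nat \<Rightarrow> nat \<Rightarrow> fm set \<Rightarrow> fm \<Rightarrow> bool" for n k where
  hyp: "a \<in> G \<Longrightarrow> der n k G a"
| dax: "L_axiom n k a \<Longrightarrow> der n k G a"
| dmp: "der n k G a \<Longrightarrow> der n k G (Imp a b) \<Longrightarrow> der n k G b"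

lemma der_empty: "der n k G a \<Longrightarrow> G = {} \<Longrightarrow> L_derivable n k a"
  by (induction rule: der.induct) (auto intro: L_derivable.intros)

lemma der_mono: "der n k G a \<Longrightarrow> G \<subseteq> H \<Longrightarrow> der n k H a"
  by (induction rule: der.induct) (auto intro: der.intros)

lemma mbc: "mbC_axiom a \<Longrightarrow> der n k G a"
  by (intro dax L_axiom.mbC)

lemma der_id: "der n k G (Imp a a)"
proof -
  have 1: "der n k G (Imp a (Imp a a))" by (rule mbc, rule Ax1)
  have 2: "der n k G (Imp a (Imp (Imp a a) a))" by (rule mbc, rule Ax1)
  have 3: "der n k G (Imp (Imp a (Imp a a)) (Imp (Imp a (Imp (Imp a a) a)) (Imp a a)))"
    by (rule mbc, rule Ax2)
  show ?thesis using dmp[OF 2 dmp[OF 1 3]] .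
qed

lemma deduction: "der n k H b \<Longrightarrow> H = insert a G \<Longrightarrow> der n k G (Imp a b)"
proof (induction rule: der.induct)
  case (hyp c)
  then show ?case
  proof (cases "c = a")
    case True then show ?thesis using der_id by simp
  next
    case False
    then have "c \<in> G" using hyp by auto
    then show ?thesis using dmp[OF der.hyp mbc[OF Ax1]] by blast
  qed
next
  case (dax c)
  then show ?case using dmp[OF der.dax mbc[OF Ax1]] by blast
next
  case (dmp H c d)
  have 1: "der n k G (Imp a c)" using dmp.IH(1) dmp.prems .
  have 2: "der n k G (Imp a (Imp c d))" using dmp.IH(2) dmp.prems .
  show ?case using der.dmp[OF 2 der.dmp[OF 1 mbc[OF Ax2]]] .
qed

lemma ded: "der n k (insert a G) b \<Longrightarrow> der n k G (Imp a b)"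
  using deduction by blast

lemma conjI': "der n k G a \<Longrightarrow> der n k G b \<Longrightarrow> der n k G (Conj a b)"
  by (meson dmp mbc Ax3)

lemma conjE1: "der n k G (Conj a b) \<Longrightarrow> der n k G a"
  by (meson dmp mbc Ax4)

lemma conjE2: "der n k G (Conj a b) \<Longrightarrow> der n k G b"
  by (meson dmp mbc Ax5)

lemma disjE': "der n k G (Disj a b) \<Longrightarrow> der n k (insert a G) c \<Longrightarrow> der n k (insert b G) c
  \<Longrightarrow> der n k G c"
  by (meson dmp mbc Ax8 ded)

lemma iffI': "der n k (insert a G) b \<Longrightarrow> der n k (insert b G) a \<Longrightarrow> der n k G (Iff a b)"
  unfolding Iff_def by (intro conjI' ded)

lemma iffD1': "der n k G (Iff a b) \<Longrightarrow> der n k G a \<Longrightarrow> der n k G b"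
  unfolding Iff_def by (meson conjE1 dmp)

lemma iffD2': "der n k G (Iff a b) \<Longrightarrow> der n k G b \<Longrightarrow> der n k G a"
  unfolding Iff_def by (meson conjE2 dmp)

lemma hyp_ins: "der n k (insert a G) a"
  by (rule hyp) simp

lemma weak: "der n k G a \<Longrightarrow> der n k (insert b G) a"
  by (erule der_mono) auto

lemma keyK:
  assumes "der n k G (Imp (Conj b (Neg b)) (Conj d (Neg d)))"
  shows "der n k G (Imp (Circ d) (Circ b))"
proof (rule ded)
  let ?G = "insert (Circ d) G"
  have ciw: "der n k ?G (Disj (Circ b) (Conj b (Neg b)))" by (intro dax L_axiom.ciw)
  show "der n k ?G (Circ b)"
  proof (rule disjE'[OF ciw])
    show "der n k (insert (Circ b) ?G) (Circ b)" by (rule hyp_ins)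
  next
    let ?H = "insert (Conj b (Neg b)) ?G"
    have a: "der n k ?H (Imp (Conj b (Neg b)) (Conj d (Neg d)))"
      using assms by (rule der_mono) auto
    have cd: "der n k ?H (Conj d (Neg d))" using dmp[OF hyp_ins a] .
    have c: "der n k ?H (Circ d)" by (rule hyp) simp
    have bc: "der n k ?H (Imp (Circ d) (Imp d (Imp (Neg d) (Circ b))))" by (rule mbc, rule bc1)
    show "der n k ?H (Circ b)"
      using dmp[OF conjE2[OF cd] dmp[OF conjE1[OF cd] dmp[OF c bc]]] .
  qed
qed

lemma conj_map:
  assumes "der n k G (Imp a c)" "der n k G (Imp b d)"
  shows "der n k G (Imp (Conj a b) (Conj c d))"
proof (rule ded)
  let ?H = "insert (Conj a b) G"
  have 1: "der n k ?H (Imp a c)" "der n k ?H (Imp b d)" using assms weak by auto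
  show "der n k ?H (Conj c d)"
    using conjI'[OF dmp[OF conjE1[OF hyp_ins] 1(1)] dmp[OF conjE2[OF hyp_ins] 1(2)]] .
qed

lemma conj_swap_map:
  assumes "der n k G (Imp a d)" "der n k G (Imp b c)"
  shows "der n k G (Imp (Conj a b) (Conj c d))"
proof (rule ded)
  let ?H = "insert (Conj a b) G"
  have 1: "der n k ?H (Imp a d)" "der n k ?H (Imp b c)" using assms weak by auto
  show "der n k ?H (Conj c d)"
    using conjI'[OF dmp[OF conjE2[OF hyp_ins] 1(2)] dmp[OF conjE1[OF hyp_ins] 1(1)]] .
qed

lemma iff_imp1: "der n k G (Iff a b) \<Longrightarrow> der n k G (Imp a b)"
  unfolding Iff_def by (rule conjE1)

lemma iff_imp2: "der n k G (Iff a b) \<Longrightarrow> der n k G (Imp b a)"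
  unfolding Iff_def by (rule conjE2)

lemma circ_iff:
  assumes "der n k G (Imp (Conj b (Neg b)) (Conj d (Neg d)))"
      and "der n k G (Imp (Conj d (Neg d)) (Conj b (Neg b)))"
  shows "der n k G (Iff (Circ b) (Circ d))"
  unfolding Iff_def using keyK[OF assms(2)] keyK[OF assms(1)] by (rule conjI')

lemma main:
  assumes "1 \<le> k"
  shows "1 \<le> j \<Longrightarrow> j \<le> k \<Longrightarrow> der n k {} (Iff (circ_pow j \<alpha>) (circ_pow j (Neg \<alpha>)))"
proof (induction j)
  case 0 then show ?case by simp
next
  case (Suc j)
  show ?case
  proof (cases "j = 0")
    case True
    have dn: "der n k {} (Iff (Neg (Neg \<alpha>)) \<alpha>)" by (intro dax L_axiom.dn)
    have "der n k {} (Iff (Circ \<alpha>) (Circ (Neg \<alpha>)))"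
      by (rule circ_iff; rule conj_swap_map; (rule der_id)?; (rule iff_imp1[OF dn] | rule iff_imp2[OF dn]))
    then show ?thesis using True by simp
  next
    case False
    then have IH: "der n k {} (Iff (circ_pow j \<alpha>) (circ_pow j (Neg \<alpha>)))"
      using Suc by simp
    have ip: "der n k {} (Iff (Neg (circ_pow j (Neg \<alpha>))) (Neg (circ_pow j \<alpha>)))"
      using False Suc.prems by (intro dax L_axiom.ip) auto
    have "der n k {} (Iff (Circ (circ_pow j \<alpha>)) (Circ (circ_pow j (Neg \<alpha>))))"
      by (rule circ_iff; rule conj_map;
          (rule iff_imp1[OF IH] | rule iff_imp2[OF IH] | rule iff_imp1[OF ip] | rule iff_imp2[OF ip]))
    then show ?thesis by simp
  qed
qed

theorem theorem26:
  fixes n k j :: nat and \<alpha> :: fm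
  assumes "1 \<le> k" and "1 \<le> j" and "j \<le> k"
  shows "L_derivable n k (Iff (circ_pow j \<alpha>) (circ_pow j (Neg \<alpha>)))"
  using main[OF assms] der_empty by blast

end
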